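(* Let $f:\mathbb{R}^n\to\mathbb{R}$ be a differentiable cost function and suppose the $G^t$ are unbiased estimators of $\nabla f$. Let $\mathcal{E}^t$ denote the event that $\|G^t(x^t)\|_\infty\le\eta$. Then the iterates of SMGD satisfy $$\mathbb{E}\left[\sum_{i\in\Omega^t}\mathrm{sgn}\big(G^t(x^t)_i\big)\frac{\partial f}{\partial x_i}(x^t)\,\middle|\,x^t,\mathcal{E}^t\right]=\frac{1}{\eta}\|\nabla f(x^t)\|_2^2,$$ where $\Omega^t=\{i\in\{1,\dots,n\}:\Delta^t_i\neq0\}$.
   Context: SMGD: Let $\alpha>0$, $\eta>0$, $x^0\in\alpha\mathbb{Z}^n$. At step $t$ a random vector $G^t(x^t)\in\mathbb{R}^n$ is drawn; then for each coordinate $i$, conditionally on $G^t$ and $x^t$, $\Delta^t_i\in\{0,1\}$ is Bernoulli with $\mathbb{P}[\Delta^t_i=1\mid G^t,x^t]=\min(|G^t(x^t)_i|/\eta,1)$, and $x^{t+1}_i=x^t_i-\alpha\,\mathrm{sgn}(G^t(x^t)_i)\Delta^t_i$. A random function $G$ is an unbiased estimator of $\nabla f$ if $\mathbb{E}[G(x)]=\nabla f(x)$ for all $x$. Standing assumptions: $\{G^t\}$ are i.i.d. copies of an unbiased estimator $G$, each $G^t$ is independent of $x^t$, and $\mathbb{E}[G^t(x^t)\mid x^t,\mathcal{E}^t]=\nabla f(x^t)$. *)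

theory Defs
  imports "HOL-Probability.Probability"
begin

definition linf_norm :: "real ^ 'n \<Rightarrow> real" where
  "linf_norm v = Max (range (\<lambda>i. \<bar>v $ i\<bar>))"

definition cond_exp_event ::
  "'a measure \<Rightarrow> 'a set \<Rightarrow> ('a \<Rightarrow> 'b::{banach,second_countable_topology}) \<Rightarrow> 'b" where
  "cond_exp_event M A Y = (\<integral>\<omega>. indicator A \<omega> *\<^sub>R Y \<omega> \<partial>M) /\<^sub>R measure M A"

end

theory Submission
  imports Defs
begin

theorem lemma4p5:
  fixes M :: "'a measure"
    and f :: "real ^ 'n \<Rightarrow> real"
    and x gradf :: "real ^ 'n"
    and \<eta> :: real
    and G :: "'a \<Rightarrow> real ^ 'n"
    and Dlt :: "'a \<Rightarrow> 'n \<Rightarrow> bool"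
  assumes "prob_space M"
    and "\<eta> > 0"
    and diff: "\<forall>y. f differentiable (at y)"
    and grad: "GDERIV f x :> gradf"
    and G_meas: "G \<in> borel_measurable M"
    and unbiased: "integrable M G" "(\<integral>\<omega>. G \<omega> \<partial>M) = gradf"
    and Dlt_meas: "\<forall>i. {\<omega> \<in> space M. Dlt \<omega> i} \<in> sets M"
    and Dlt_bernoulli: "\<forall>i. \<forall>A \<in> sets borel.
          measure M {\<omega> \<in> space M. Dlt \<omega> i \<and> G \<omega> \<in> A}
            = (\<integral>\<omega>. indicator A (G \<omega>) * min (\<bar>G \<omega> $ i\<bar> / \<eta>) 1 \<partial>M)"
    and E_def: "E = {\<omega> \<in> space M. linf_norm (G \<omega>) \<le> \<eta>}"
    and E_pos: "measure M E > 0"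
    and cond_unbiased: "cond_exp_event M E G = gradf"
  shows "cond_exp_event M E
           (\<lambda>\<omega>. \<Sum>i\<in>{i. Dlt \<omega> i}. sgn (G \<omega> $ i) * gradf $ i)
         = (norm gradf)\<^sup>2 / \<eta>"
proof -
  interpret prob_space M by fact
  have eta: "\<eta> > 0" by fact
  define A where "A = {g::real^'n. \<forall>i. \<bar>g$i\<bar> \<le> \<eta>}"
  have "closed A" unfolding A_def
    by (intro closed_Collect_all closed_Collect_le continuous_intros)
  then have A_borel: "A \<in> sets borel" by (rule borel_closed)
  have E_eq: "E = G -` A \<inter> space M"
    unfolding E_def A_def linf_norm_def
    by (auto simp: finite_imageI)
  have E_sets: "E \<in> sets M"
    unfolding E_eq by (rule measurable_sets[OF G_meas A_borel])
  have Gi_int: "integrable M (\<lambda>\<omega>. G \<omega> $ i)" for i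
    by (rule integrable_bounded_linear[OF bounded_linear_vec_nth unbiased(1)])
  have GiE_int: "integrable M (\<lambda>\<omega>. indicator E \<omega> * G \<omega> $ i)" for i
    using integrable_real_mult_indicator[OF E_sets Gi_int[of i]]
    by (simp add: mult.commute)
  have key: "(\<integral>\<omega>. indicator E \<omega> * (if Dlt \<omega> i then sgn (G \<omega> $ i) else 0) \<partial>M)
      = (\<integral>\<omega>. indicator E \<omega> * G \<omega> $ i \<partial>M) / \<eta>" for i
  proof -
    define Ap where "Ap = A \<inter> {g. g$i > 0}"
    define Am where "Am = A \<inter> {g. g$i < 0}"
    have "open {g::real^'n. g$i > 0}" by (intro open_Collect_less continuous_intros)
    then have Ap_b: "Ap \<in> sets borel" unfolding Ap_def using A_borel by auto
    have "open {g::real^'n. g$i < 0}" by (intro open_Collect_less continuous_intros)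
    then have Am_b: "Am \<in> sets borel" unfolding Am_def using A_borel by auto
    have Dl: "{\<omega> \<in> space M. Dlt \<omega> i \<and> G \<omega> \<in> B} \<in> sets M" if "B \<in> sets borel" for B
    proof -
      have "{\<omega> \<in> space M. Dlt \<omega> i \<and> G \<omega> \<in> B} = {\<omega> \<in> space M. Dlt \<omega> i} \<inter> (G -` B \<inter> space M)"
        by auto
      then show ?thesis using Dlt_meas measurable_sets[OF G_meas that] by auto
    qed
    have bint: "integrable M (\<lambda>\<omega>. indicator B (G \<omega>) * min (\<bar>G \<omega> $ i\<bar> / \<eta>) 1)"
      if "B \<in> sets borel" for B
    proof (rule integrable_const_bound[where B=1])
      show "AE x in M. norm (indicator B (G x) * min (\<bar>G x $ i\<bar> / \<eta>) 1) \<le> (1::real)"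
        using eta by (auto simp: indicator_def)
      show "(\<lambda>x. indicator B (G x) * min (\<bar>G x $ i\<bar> / \<eta>) 1) \<in> borel_measurable M"
        using that G_meas borel_measurable_integrable[OF Gi_int[of i]] by measurable
    qed
    have "(\<integral>\<omega>. indicator E \<omega> * (if Dlt \<omega> i then sgn (G \<omega> $ i) else 0) \<partial>M)
        = (\<integral>\<omega>. indicator {\<omega> \<in> space M. Dlt \<omega> i \<and> G \<omega> \<in> Ap} \<omega>
              - indicator {\<omega> \<in> space M. Dlt \<omega> i \<and> G \<omega> \<in> Am} \<omega> \<partial>M)"
      by (rule Bochner_Integration.integral_cong[OF refl]) (auto simp: indicator_def E_eq Ap_def Am_def sgn_real_def)
    also have "\<dots> = measure M {\<omega> \<in> space M. Dlt \<omega> i \<and> G \<omega> \<in> Ap}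
                 - measure M {\<omega> \<in> space M. Dlt \<omega> i \<and> G \<omega> \<in> Am}"
      using Dl[OF Ap_b] Dl[OF Am_b]
      by (subst Bochner_Integration.integral_diff) (auto intro!: integrable_real_indicator simp: emeasure_eq_measure)
    also have "\<dots> = (\<integral>\<omega>. indicator Ap (G \<omega>) * min (\<bar>G \<omega> $ i\<bar> / \<eta>) 1 \<partial>M)
                 - (\<integral>\<omega>. indicator Am (G \<omega>) * min (\<bar>G \<omega> $ i\<bar> / \<eta>) 1 \<partial>M)"
      using Dlt_bernoulli Ap_b Am_b by simp
    also have "\<dots> = (\<integral>\<omega>. indicator Ap (G \<omega>) * min (\<bar>G \<omega> $ i\<bar> / \<eta>) 1
                 - indicator Am (G \<omega>) * min (\<bar>G \<omega> $ i\<bar> / \<eta>) 1 \<partial>M)"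
      using bint[OF Ap_b] bint[OF Am_b] by (simp add: Bochner_Integration.integral_diff)
    also have "\<dots> = (\<integral>\<omega>. indicator E \<omega> * G \<omega> $ i / \<eta> \<partial>M)"
    proof (rule Bochner_Integration.integral_cong[OF refl])
      fix \<omega> assume om: "\<omega> \<in> space M"
      have "\<bar>G \<omega> $ i\<bar> \<le> \<eta>" if "G \<omega> \<in> A" using that unfolding A_def by auto
      then show "indicator Ap (G \<omega>) * min (\<bar>G \<omega> $ i\<bar> / \<eta>) 1
                 - indicator Am (G \<omega>) * min (\<bar>G \<omega> $ i\<bar> / \<eta>) 1
               = indicator E \<omega> * G \<omega> $ i / \<eta>"
        using eta om by (auto simp: indicator_def E_eq Ap_def Am_def min_def field_simps abs_if split: if_splits)
    qed
    also have "\<dots> = (\<integral>\<omega>. indicator E \<omega> * G \<omega> $ i \<partial>M) / \<eta>"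
      by simp
    finally show ?thesis .
  qed
  have comp: "(\<integral>\<omega>. indicator E \<omega> * G \<omega> $ i \<partial>M) = gradf $ i * measure M E" for i
  proof -
    have "(\<integral>\<omega>. indicator E \<omega> * G \<omega> $ i \<partial>M) = (\<integral>\<omega>. indicator E \<omega> *\<^sub>R G \<omega> \<partial>M) $ i"
      using integral_bounded_linear[OF bounded_linear_vec_nth integrable_mult_indicator[OF E_sets unbiased(1)], of i]
      by simp
    also have "\<dots> = gradf $ i * measure M E"
      using cond_unbiased E_pos unfolding cond_exp_event_def
      by (auto simp: field_simps)
    finally show ?thesis .
  qed
  have sumeq: "indicator E \<omega> *\<^sub>R (\<Sum>i\<in>{i. Dlt \<omega> i}. sgn (G \<omega> $ i) * gradf $ i)
     = (\<Sum>i\<in>UNIV. gradf $ i * (indicator E \<omega> * (if Dlt \<omega> i then sgn (G \<omega> $ i) else 0)))" for \<omega>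
  proof -
    have "(\<Sum>i\<in>{i. Dlt \<omega> i}. sgn (G \<omega> $ i) * gradf $ i)
        = (\<Sum>i\<in>UNIV. if Dlt \<omega> i then sgn (G \<omega> $ i) * gradf $ i else 0)"
      using sum.inter_restrict[of UNIV "\<lambda>i. sgn (G \<omega> $ i) * gradf $ i" "{i. Dlt \<omega> i}"] by simp
    then show ?thesis by (auto simp: sum_distrib_left mult_ac indicator_def intro!: sum.cong)
  qed
  have term_int: "integrable M (\<lambda>\<omega>. indicator E \<omega> * (if Dlt \<omega> i then sgn (G \<omega> $ i) else 0))" for i
  proof (rule integrable_const_bound[where B=1])
    show "AE x in M. norm (indicator E x * (if Dlt x i then sgn (G x $ i) else 0)) \<le> (1::real)"
      by (auto simp: indicator_def sgn_real_def)
    have "(\<lambda>x. indicator E x * (indicator {\<omega> \<in> space M. Dlt \<omega> i} x * sgn (G x $ i))) \<in> borel_measurable M"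
      using E_sets Dlt_meas G_meas borel_measurable_integrable[OF Gi_int[of i]] by measurable
    then show "(\<lambda>x. indicator E x * (if Dlt x i then sgn (G x $ i) else 0)) \<in> borel_measurable M"
      by (rule measurable_cong[THEN iffD1, rotated]) (auto simp: indicator_def)
  qed
  have "(\<integral>\<omega>. indicator E \<omega> *\<^sub>R (\<Sum>i\<in>{i. Dlt \<omega> i}. sgn (G \<omega> $ i) * gradf $ i) \<partial>M)
      = (\<Sum>i\<in>UNIV. gradf $ i * (gradf $ i * measure M E / \<eta>))"
    unfolding sumeq using term_int
    by (simp add: integral_sum key comp)
  then show ?thesis
    unfolding cond_exp_event_def power2_norm_eq_inner inner_vec_def
    using E_pos by (simp add: sum_divide_distrib field_simps)
qed

end
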